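(* Let $\mathcal P$ be a random collection of pairwise disjoint finite subsets of $\mathbb Z$. Let $k\ge2$, $\gamma\in\mathbb R$ and $p_0>0$ be such that for all integers $i_1<i_2<\dots<i_k$, $$\Pr\big(\{i_1,\dots,i_k\}\in\mathcal P\big)\ \ge\ p_0\prod_{j=1}^{k-1}(i_{j+1}-i_j)^{-\gamma}.$$ Then $\gamma>1$ and $p_0\le\dfrac{1}{k\,\zeta(\gamma)^{k-1}}$, where $\zeta$ is the Riemann zeta function. *)

theory Defs
  imports "HOL-Probability.Probability"
begin

text \<open>Riemann zeta function on real arguments: the Dirichlet series
  sum over n >= 1 of n to the power (-s). It is only meaningful (convergent) for s > 1,
  which is the range in which it is used.\<close>
definition zeta_real :: "real \<Rightarrow> real" where
  "zeta_real s = (\<Sum>n. 1 / (real (Suc n)) powr s)"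

end

theory Submission
  imports Defs
begin

lemma smono_ext:
  fixes i :: "nat \<Rightarrow> int"
  assumes "\<forall>j. Suc j < k \<longrightarrow> i j < i (Suc j)" "a < b" "b < k"
  shows "i a < i b"
  using assms(2,3)
proof (induction b)
  case 0 then show ?case by simp
next
  case (Suc b)
  then show ?case using assms(1)
    by (metis less_Suc_eq order.strict_trans Suc_lessD)
qed

lemma smono_iff:
  fixes i :: "nat \<Rightarrow> int"
  assumes "\<forall>j. Suc j < k \<longrightarrow> i j < i (Suc j)" "a < k" "b < k"
  shows "i a < i b \<longleftrightarrow> a < b"
  using smono_ext[OF assms(1)] assms(2,3)
  by (metis linorder_neq_iff order.asym)

lemma smono_inj:
  fixes i :: "nat \<Rightarrow> int"
  assumes "\<forall>j. Suc j < k \<longrightarrow> i j < i (Suc j)"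
  shows "inj_on i {..<k}"
  using smono_iff[OF assms] by (intro inj_onI) (metis lessThan_iff linorder_neq_iff)

lemma smono_card:
  fixes i :: "nat \<Rightarrow> int"
  assumes "\<forall>j. Suc j < k \<longrightarrow> i j < i (Suc j)" "j < k"
  shows "card {x \<in> i ` {..<k}. x < i j} = j"
proof -
  have "{x \<in> i ` {..<k}. x < i j} = i ` {..<j}"
    using smono_iff[OF assms(1) _ assms(2)] assms(2) by auto
  moreover have "inj_on i {..<j}"
    using smono_inj[OF assms(1)] assms(2) by (auto intro: inj_on_subset)
  ultimately show ?thesis by (simp add: card_image)
qed

lemma smono_recover:
  fixes i i' :: "nat \<Rightarrow> int"
  assumes "\<forall>j. Suc j < k \<longrightarrow> i j < i (Suc j)" "\<forall>j. Suc j < k \<longrightarrow> i' j < i' (Suc j)"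
    and "i ` {..<k} = i' ` {..<k}" "j < k"
  shows "i j = i' j"
proof -
  obtain j' where j': "j' < k" "i j = i' j'" using assms(3,4) by force
  have "card {x \<in> i ` {..<k}. x < i j} = j" by (rule smono_card[OF assms(1,4)])
  moreover have "card {x \<in> i' ` {..<k}. x < i' j'} = j'" by (rule smono_card[OF assms(2) j'(1)])
  ultimately have "j = j'" using assms(3) j'(2) by simp
  then show ?thesis using j' by simp
qed

definition seqi :: "nat \<Rightarrow> (nat \<Rightarrow> nat) \<Rightarrow> nat \<Rightarrow> int" where
  "seqi m g j = (\<Sum>l<j. int (g l)) - (\<Sum>l<m. int (g l))"

lemma seqi_diff: "seqi m g (Suc j) - seqi m g j = int (g j)"
  by (simp add: seqi_def)

lemma seqi_zero: "seqi m g m = 0"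
  by (simp add: seqi_def)

lemma seqi_mono:
  assumes "g \<in> PiE {..<K} (\<lambda>_. {1..N})"
  shows "\<forall>j. Suc j < Suc K \<longrightarrow> seqi m g j < seqi m g (Suc j)"
proof (intro allI impI)
  fix j assume "Suc j < Suc K"
  then have "g j \<ge> 1" using assms by (auto simp: PiE_def Pi_def)
  then show "seqi m g j < seqi m g (Suc j)" using seqi_diff[of m g j] by simp
qed

lemma seqi_inj:
  assumes "g \<in> PiE {..<K} (\<lambda>_. {1..N})" "g' \<in> PiE {..<K} (\<lambda>_. {1..N})"
    and "m < Suc K" "m' < Suc K"
    and "seqi m g ` {..<Suc K} = seqi m' g' ` {..<Suc K}"
  shows "m = m' \<and> g = g'"
proof -
  have eq: "\<And>j. j < Suc K \<Longrightarrow> seqi m g j = seqi m' g' j"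
    by (rule smono_recover[OF seqi_mono[OF assms(1)] seqi_mono[OF assms(2)] assms(5)])
  have "seqi m g m' = seqi m g m" using eq[OF assms(4)] by (simp add: seqi_zero)
  then have mm: "m = m'"
    using smono_inj[OF seqi_mono[OF assms(1)]] assms(3,4) by (auto dest: inj_onD)
  have "g j = g' j" if "j < K" for j
  proof -
    have "int (g j) = int (g' j)"
      using eq[of j] eq[of "Suc j"] that seqi_diff[of m g j] seqi_diff[of m' g' j] by simp
    then show ?thesis by simp
  qed
  then have "g = g'" using assms(1,2) by (intro PiE_ext) auto
  with mm show ?thesis by simp
qed

theorem mainTheorem6:
  fixes M :: "'a measure" and P :: "'a \<Rightarrow> int set set"
    and k :: nat and \<gamma> p0 :: real
  assumes "prob_space M"
    and "\<And>\<omega>. \<omega> \<in> space M \<Longrightarrow> (\<forall>A\<in>P \<omega>. finite A) \<and> disjoint (P \<omega>)"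
    and "\<And>S. finite S \<Longrightarrow> {\<omega> \<in> space M. S \<in> P \<omega>} \<in> sets M"
    and "k \<ge> 2"
    and "p0 > 0"
    and "\<And>i :: nat \<Rightarrow> int. (\<forall>j. Suc j < k \<longrightarrow> i j < i (Suc j)) \<Longrightarrow>
           measure M {\<omega> \<in> space M. i ` {..<k} \<in> P \<omega>}
             \<ge> p0 * (\<Prod>j<k - 1. (real_of_int (i (Suc j) - i j)) powr (-\<gamma>))"
  shows "\<gamma> > 1 \<and> p0 \<le> 1 / (real k * zeta_real \<gamma> ^ (k - 1))"
proof -
  interpret prob_space M by fact
  define K where "K = k - 1"
  have kK: "k = Suc K" and K1: "K \<ge> 1" using assms(4) by (auto simp: K_def)
  have bound: "real k * p0 * (\<Sum>n\<in>{1..N}. real n powr (-\<gamma>)) ^ K \<le> 1" for N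
  proof -
    define T where "T = {..<k} \<times> PiE {..<K} (\<lambda>_. {1..N})"
    define E where "E t = {\<omega> \<in> space M. seqi (fst t) (snd t) ` {..<k} \<in> P \<omega>}" for t
    have finT: "finite T" unfolding T_def by (auto intro: finite_PiE)
    have ET: "E ` T \<subseteq> sets M" unfolding E_def using assms(3) by auto
    have disj: "disjoint_family_on E T"
    proof (unfold disjoint_family_on_def, intro ballI impI)
      fix t t' assume t: "t \<in> T" and t': "t' \<in> T" and ne: "t \<noteq> t'"
      obtain m g where tm: "t = (m, g)" by fastforce
      obtain m' g' where tm': "t' = (m', g')" by fastforce
      have mg: "m < Suc K" "g \<in> PiE {..<K} (\<lambda>_. {1..N})" using t tm kK by (auto simp: T_def)
      have mg': "m' < Suc K" "g' \<in> PiE {..<K} (\<lambda>_. {1..N})" using t' tm' kK by (auto simp: T_def)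
      have Sne: "seqi m g ` {..<k} \<noteq> seqi m' g' ` {..<k}"
        using seqi_inj[OF mg(2) mg'(2) mg(1) mg'(1)] ne tm tm' kK by auto
      have z: "0 \<in> seqi m g ` {..<k}" "0 \<in> seqi m' g' ` {..<k}"
        using mg(1) mg'(1) kK seqi_zero[of m g] seqi_zero[of m' g'] by (auto intro!: image_eqI[where x=m] image_eqI[where x=m'])
      show "E t \<inter> E t' = {}"
      proof (rule ccontr)
        assume "E t \<inter> E t' \<noteq> {}"
        then obtain \<omega> where w: "\<omega> \<in> space M" "seqi m g ` {..<k} \<in> P \<omega>" "seqi m' g' ` {..<k} \<in> P \<omega>"
          unfolding E_def tm tm' by auto
        then have "disjoint (P \<omega>)" using assms(2) by blast
        then have "seqi m g ` {..<k} \<inter> seqi m' g' ` {..<k} = {}"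
          using w Sne unfolding disjoint_def disjnt_def by (auto dest: pairwiseD)
        then show False using z by blast
      qed
    qed
    have "(\<Sum>t\<in>T. measure M (E t)) = measure M (\<Union>t\<in>T. E t)"
      by (rule measure_finite_Union[symmetric, OF finT ET disj]) (simp add: emeasure_finite)
    also have "\<dots> \<le> 1" by (rule prob_le_1)
    finally have s1: "(\<Sum>t\<in>T. measure M (E t)) \<le> 1" .
    have lb: "p0 * (\<Prod>j<K. real (snd t j) powr (-\<gamma>)) \<le> measure M (E t)" if "t \<in> T" for t
    proof -
      obtain m g where tm: "t = (m, g)" by fastforce
      have mg: "g \<in> PiE {..<K} (\<lambda>_. {1..N})" using that tm by (auto simp: T_def)
      have "p0 * (\<Prod>j<k - 1. (real_of_int (seqi m g (Suc j) - seqi m g j)) powr (-\<gamma>))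
          \<le> measure M (E t)"
        unfolding E_def tm fst_conv snd_conv
        by (rule assms(6)) (use seqi_mono[OF mg, of m] kK in simp)
      then show ?thesis by (simp add: seqi_diff tm K_def)
    qed
    have "(\<Sum>t\<in>T. p0 * (\<Prod>j<K. real (snd t j) powr (-\<gamma>))) = 
        (\<Sum>m<k. \<Sum>g\<in>PiE {..<K} (\<lambda>_. {1..N}). p0 * (\<Prod>j<K. real (g j) powr (-\<gamma>)))"
      unfolding T_def by (subst sum.cartesian_product) (simp add: split_def)
    also have "\<dots> = real k * p0 * (\<Sum>g\<in>PiE {..<K} (\<lambda>_. {1..N}). (\<Prod>j<K. real (g j) powr (-\<gamma>)))"
      by (simp add: sum_distrib_left mult.assoc)
    also have "(\<Sum>g\<in>PiE {..<K} (\<lambda>_. {1..N}). (\<Prod>j<K. real (g j) powr (-\<gamma>)))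
        = (\<Prod>j<K. \<Sum>n\<in>{1..N}. real n powr (-\<gamma>))"
      by (rule prod_sum_PiE[symmetric]) auto
    also have "\<dots> = (\<Sum>n\<in>{1..N}. real n powr (-\<gamma>)) ^ K" by simp
    finally have "real k * p0 * (\<Sum>n\<in>{1..N}. real n powr (-\<gamma>)) ^ K
        = (\<Sum>t\<in>T. p0 * (\<Prod>j<K. real (snd t j) powr (-\<gamma>)))" by simp
    also have "\<dots> \<le> (\<Sum>t\<in>T. measure M (E t))" by (rule sum_mono) (rule lb)
    finally show ?thesis using s1 by linarith
  qed
  define f where "f n = 1 / real (Suc n) powr \<gamma>" for n
  have f0: "f n \<ge> 0" for n by (simp add: f_def)
  have sf: "(\<Sum>n\<in>{1..N}. real n powr (-\<gamma>)) = sum f {..<N}" for N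
    using sum_bounds_lt_plus1[of "\<lambda>n. real n powr (-\<gamma>)" N]
    by (simp add: f_def powr_minus_divide del: of_nat_Suc)
  have bd: "sum f {..<N} \<le> 1 / (real k * p0)" for N
  proof (cases N)
    case 0 then show ?thesis using assms(5) by simp
  next
    case (Suc N')
    have "f 0 \<le> sum f {..<N}"
      using Suc f0 by (intro member_le_sum) auto
    then have ge1: "1 \<le> sum f {..<N}" by (simp add: f_def)
    then have "sum f {..<N} \<le> sum f {..<N} ^ K" using K1 by (simp add: self_le_power)
    moreover have "real k * p0 * sum f {..<N} ^ K \<le> 1" using bound[of N] sf[of N] by simp
    moreover have "real k * p0 \<ge> 0" using assms(4,5) by simp
    ultimately have "real k * p0 * sum f {..<N} \<le> 1"
      by (meson mult_left_mono order.trans)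
    then show ?thesis using assms(4,5) by (simp add: field_simps)
  qed
  have summ: "summable f" by (rule summableI_nonneg_bounded[OF f0 bd])
  have "summable (\<lambda>n. real n powr (-\<gamma>))"
    using summ by (subst summable_Suc_iff[symmetric]) (simp add: f_def[abs_def] powr_minus_divide del: of_nat_Suc)
  then have g1: "\<gamma> > 1" by (simp add: summable_real_powr_iff)
  have z: "zeta_real \<gamma> = suminf f" unfolding zeta_real_def f_def[abs_def] by (rule refl)
  have "sum f {0} \<le> suminf f" by (rule sum_le_suminf[OF summ]) (auto simp: f0)
  then have zpos: "zeta_real \<gamma> \<ge> 1" using z by (simp add: f_def)
  have lim: "(\<lambda>N. real k * p0 * sum f {..<N} ^ K) \<longlonglongrightarrow> real k * p0 * zeta_real \<gamma> ^ K"
    unfolding z by (intro tendsto_intros summable_LIMSEQ summ)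
  have "real k * p0 * zeta_real \<gamma> ^ K \<le> 1"
    by (rule LIMSEQ_le_const2[OF lim]) (use bound sf in auto)
  then have "p0 * (real k * zeta_real \<gamma> ^ K) \<le> 1" by (simp add: algebra_simps)
  moreover have "real k * zeta_real \<gamma> ^ K > 0" using zpos assms(4) by simp
  ultimately have "p0 \<le> 1 / (real k * zeta_real \<gamma> ^ K)" by (simp add: pos_le_divide_eq)
  then show ?thesis using g1 by (simp add: K_def)
qed

end
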